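(* Let $f\in C_p(\mathbb{R})$ with $f(z)\ge0$ for all $z\in[0,1]$. Then $$H_tf(x)=\min_{z\in[0,1]}q_f(t,x;z)\quad\text{for all }(t,x)\in(0,\infty)\times[0,1].$$
   Context: $C_p(\mathbb{R})$ denotes the set of all continuous functions $f:\mathbb{R}\to\mathbb{R}$ periodic with period $1$ with $f(0)=0$. For such $f$, $q_f(t,x;z)=f(z)+\frac{1}{2t}(x-z)^2$ for $(t,x,z)\in(0,\infty)\times\mathbb{R}\times\mathbb{R}$, and $H_tf(x)=\inf_{z\in\mathbb{R}}q_f(t,x;z)$. *)

theory Defs
  imports "HOL-Analysis.Analysis"
begin

definition Cp :: "(real \<Rightarrow> real) set" where
  "Cp = {f. continuous_on UNIV f \<and> (\<forall>x. f (x + 1) = f x) \<and> f 0 = 0}"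

definition qf :: "(real \<Rightarrow> real) \<Rightarrow> real \<Rightarrow> real \<Rightarrow> real \<Rightarrow> real" where
  "qf f t x z = f z + (x - z)^2 / (2 * t)"

definition Ht :: "real \<Rightarrow> (real \<Rightarrow> real) \<Rightarrow> real \<Rightarrow> real" where
  "Ht t f x = (INF z\<in>(UNIV::real set). qf f t x z)"

end

theory Submission
  imports Defs
begin

lemma per_nat: assumes "\<forall>x. f (x + 1) = f x" shows "f (x + real n) = (f x::real)"
  using assms by (induction n arbitrary: x) (auto simp: add.assoc[symmetric])

lemma per_int: assumes "\<forall>x. f (x + 1) = f x" shows "f (x + real_of_int k) = (f x::real)"
proof (cases "k \<ge> 0")
  case True
  then obtain n where "k = int n" by (metis nonneg_eq_int)
  then show ?thesis using per_nat[OF assms] by simp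
next
  case False
  then obtain n where n: "k = - int n" by (metis minus_minus neg_0_le_iff_le nonneg_eq_int linorder_not_le less_imp_le)
  have "f (x + real_of_int k) = f (x + real_of_int k + real n)"
    using per_nat[OF assms] by metis
  then show ?thesis using n by simp
qed

theorem lemma4p1:
  fixes f :: "real \<Rightarrow> real"
  assumes "f \<in> Cp"
    and "\<forall>z\<in>{0..1}. f z \<ge> 0"
  shows "\<forall>t x. t > 0 \<and> x \<in> {0..1} \<longrightarrow>
           (\<exists>z\<in>{0..1}. (\<forall>w\<in>{0..1}. qf f t x z \<le> qf f t x w)
                        \<and> Ht t f x = qf f t x z)"
proof (intro allI impI)
  fix t x :: real
  assume tx: "t > 0 \<and> x \<in> {0..1}"
  have cont: "continuous_on UNIV f" and per: "\<forall>x. f (x + 1) = f x" and f0: "f 0 = 0"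
    using assms(1) by (auto simp: Cp_def)
  have f1: "f 1 = 0" using per f0 by (metis add.left_neutral)
  have nonneg: "f z \<ge> 0" for z
  proof -
    have "f z = f (z - real_of_int \<lfloor>z\<rfloor>)"
      using per_int[OF per, of "z - real_of_int \<lfloor>z\<rfloor>" "\<lfloor>z\<rfloor>"] by simp
    moreover have "z - real_of_int \<lfloor>z\<rfloor> \<in> {0..1}"
      by (simp add: less_imp_le) linarith
    ultimately show ?thesis using assms(2) by simp
  qed
  have "continuous_on {0..1} (\<lambda>z. qf f t x z)"
    unfolding qf_def
    using tx by (intro continuous_intros continuous_on_subset[OF cont]) auto
  then obtain z where z: "z \<in> {0..1}" "\<forall>w\<in>{0..1}. qf f t x z \<le> qf f t x w"
    using continuous_attains_inf[of "{0..1::real}" "\<lambda>z. qf f t x z"] by auto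
  have all: "qf f t x z \<le> qf f t x w" for w
  proof (cases "w \<in> {0..1}")
    case True then show ?thesis using z by auto
  next
    case False
    then consider "w < 0" | "w > 1" by fastforce
    then show ?thesis
    proof cases
      case 1
      have "(x - 0)^2 \<le> (x - w)^2" using 1 tx by (subst abs_le_square_iff[symmetric]) auto
      then have "qf f t x 0 \<le> qf f t x w"
        unfolding qf_def using f0 nonneg[of w] tx by (smt (verit) divide_right_mono)
      then show ?thesis using z(2)[rule_format, of 0] by simp
    next
      case 2
      have "(x - 1)^2 \<le> (x - w)^2"
        using 2 tx by (subst abs_le_square_iff[symmetric]) auto
      then have "qf f t x 1 \<le> qf f t x w"
        unfolding qf_def using f1 nonneg[of w] tx by (smt (verit) divide_right_mono)
      then show ?thesis using z(2)[rule_format, of 1] by simp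
    qed
  qed
  have "Ht t f x = qf f t x z"
    unfolding Ht_def by (rule cInf_eq_minimum) (use all in auto)
  then show "\<exists>z\<in>{0..1}. (\<forall>w\<in>{0..1}. qf f t x z \<le> qf f t x w) \<and> Ht t f x = qf f t x z"
    using z by blast
qed

end
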